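(* Let $\gamma_1,\gamma_2>0$, let $M\ge1$ be an integer, and let $Z\sim\mathrm{Gamma}(M,1)$ and $Y\sim\mathrm{Gamma}(1,1)$ be independent. Let $X=\dfrac{\gamma_1 Z}{1+\gamma_2 Y}$. Then $$\mathbb{E}[\log_2(1+X)]=\log_2(e)\sum_{i=0}^{M-1}\sum_{l=0}^{i}\frac{\gamma_1^{\,l+1-i}}{\gamma_2\,(i-l)!}\,I_1\!\left(\frac{1}{\gamma_1},\frac{\gamma_1}{\gamma_2},i,l+1\right),$$ where $I_1(a,b,m,n)=\displaystyle\int_0^\infty\frac{x^m e^{-ax}}{(x+b)^n(x+1)}\,dx$.
   Context: $\mathrm{Gamma}(M,1)$ denotes the distribution of a sum of $M$ i.i.d. unit-mean exponential random variables (the paper writes $\chi^2_{2M}$). This quantity is denoted $R_I^{(2)}(\gamma_1,\gamma_2,M)$. *)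

theory Defs
  imports "HOL-Probability.Probability"
begin

definition I1 :: "real \<Rightarrow> real \<Rightarrow> nat \<Rightarrow> nat \<Rightarrow> real" where
  "I1 a b m n = (LBINT x:{0<..}. x ^ m * exp (- a * x) / ((x + b) ^ n * (x + 1)))"

end

theory Submission
  imports Defs
begin

definition Tl :: "nat \<Rightarrow> real \<Rightarrow> real" where
  "Tl k u = (\<Sum>n\<le>k. u^n * exp (-u) / fact n)"

lemma Tl_meas[measurable]: "Tl k \<in> borel_measurable borel"
  unfolding Tl_def by measurable

lemma Tl_nonneg: "0 \<le> u \<Longrightarrow> 0 \<le> Tl k u"
  unfolding Tl_def by (intro sum_nonneg) auto

lemma DERIV_Tl: "DERIV (\<lambda>x. - Tl k x) x :> x^k * exp (-x) / fact k"
proof (induction k)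
  case 0 show ?case unfolding Tl_def by (auto intro!: derivative_eq_intros)
next
  case (Suc k)
  have "DERIV (\<lambda>x. - Tl k x - (x^Suc k * exp (-x)) / fact (Suc k)) x :>
    x^k * exp (-x) / fact k - ((real (Suc k) - x) * x ^ k * exp (- x)) / (fact (Suc k))"
    by (intro DERIV_diff Suc)
       (auto intro!: derivative_eq_intros simp del: fact_Suc power_Suc
             simp add: field_simps power_Suc[symmetric])
  also have "(\<lambda>x. - Tl k x - (x^Suc k * exp (-x)) / fact (Suc k)) = (\<lambda>x. - Tl (Suc k) x)"
    by (simp add: Tl_def)
  also have "x^k * exp (-x) / fact k - ((real (Suc k) - x) * x ^ k * exp (- x)) / (fact (Suc k)) = x^(Suc k) * exp (-x) / fact (Suc k)"
    by (auto simp: field_simps simp del: fact_Suc)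
       (simp_all add: of_nat_Suc field_simps)
  finally show ?case .
qed

lemma Tl_lim: "((\<lambda>x. - Tl k x) \<longlongrightarrow> 0) at_top"
proof -
  have "((\<lambda>x::real. - (\<Sum>n\<le>k. (x ^ n / exp x) / (fact n))) \<longlongrightarrow> - (\<Sum>n\<le>k. 0 / (fact n))) at_top"
    by (intro tendsto_intros tendsto_power_div_exp_0) simp
  then show ?thesis by (simp add: Tl_def exp_minus field_simps)
qed

lemma tail_erlang:
  assumes "0 \<le> a"
  shows "(\<integral>\<^sup>+x. ennreal (erlang_density k 1 x) * indicator {a..} x \<partial>lborel) = ennreal (Tl k a)"
proof -
  have "(\<integral>\<^sup>+x. ennreal (erlang_density k 1 x) * indicator {a..} x \<partial>lborel) = 0 - (- Tl k a)"
    apply (rule nn_integral_FTC_atLeast[where F="\<lambda>x. - Tl k x"])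
    using assms DERIV_Tl Tl_lim by (auto simp: erlang_density_def)
  then show ?thesis by simp
qed

lemma logrep:
  assumes "0 \<le> c"
  shows "ennreal (ln (1 + c)) = (\<integral>\<^sup>+t. ennreal (1 / (1 + t)) * indicator {0..c} t \<partial>lborel)"
proof -
  have "(\<integral>\<^sup>+t. ennreal (1 / (1 + t)) * indicator {0..c} t \<partial>lborel) = ln (1 + c) - ln (1 + 0)"
    by (rule nn_integral_FTC_Icc[where F="\<lambda>t. ln (1 + t)"])
       (use assms in \<open>auto intro!: derivative_eq_intros\<close>)
  then show ?thesis by simp
qed

lemma lemA:
  assumes s: "0 < s"
  shows "(\<integral>\<^sup>+z. ennreal (erlang_density k 1 z) * ennreal (ln (1 + z / s)) \<partial>lborel)
       = (\<integral>\<^sup>+t. ennreal (Tl k (s * t) / (1 + t)) * indicator {0..} t \<partial>lborel)"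
proof -
  have ind: "indicator {0..z/s} t = (indicator {0..} t * indicator {s*t..} z :: ennreal)" for z t
    using s by (auto split: split_indicator simp: field_simps)
  have "(\<integral>\<^sup>+z. ennreal (erlang_density k 1 z) * ennreal (ln (1 + z / s)) \<partial>lborel)
      = (\<integral>\<^sup>+z. \<integral>\<^sup>+t. ennreal (erlang_density k 1 z) * (ennreal (1 / (1 + t)) * indicator {0..} t * indicator {s*t..} z) \<partial>lborel \<partial>lborel)"
  proof (intro nn_integral_cong)
    fix z :: real
    show "ennreal (erlang_density k 1 z) * ennreal (ln (1 + z / s)) =
      (\<integral>\<^sup>+t. ennreal (erlang_density k 1 z) * (ennreal (1 / (1 + t)) * indicator {0..} t * indicator {s*t..} z) \<partial>lborel)"
    proof (cases "z < 0")
      case True then show ?thesis by (simp add: erlang_density_def)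
    next
      case False
      then have "ennreal (ln (1 + z / s)) = (\<integral>\<^sup>+t. ennreal (1 / (1 + t)) * indicator {0..z/s} t \<partial>lborel)"
        using s by (intro logrep) auto
      moreover have "(\<lambda>t. ennreal (1 / (1 + t)) * indicator {0..z/s} t) \<in> borel_measurable lborel"
        by measurable
      ultimately show ?thesis
        by (simp add: nn_integral_cmult[symmetric] ind mult.assoc)
    qed
  qed
  also have "\<dots> = (\<integral>\<^sup>+t. \<integral>\<^sup>+z. ennreal (erlang_density k 1 z) * (ennreal (1 / (1 + t)) * indicator {0..} t * indicator {s*t..} z) \<partial>lborel \<partial>lborel)"
  proof (rule lborel_pair.Fubini'[symmetric])
    have "(\<lambda>x::real\<times>real. fst x \<in> {s * snd x..}) = (\<lambda>x. s * snd x \<le> fst x)" by auto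
    moreover have "Measurable.pred (borel \<Otimes>\<^sub>M borel) (\<lambda>x::real\<times>real. s * snd x \<le> fst x)" by measurable
    ultimately have [measurable]: "Measurable.pred (borel \<Otimes>\<^sub>M borel) (\<lambda>x::real\<times>real. fst x \<in> {s * snd x..})" by simp
    show "(\<lambda>(z, t). ennreal (erlang_density k 1 z) * (ennreal (1 / (1 + t)) * indicator {0..} t * indicator {s*t..} z)) \<in> borel_measurable (lborel \<Otimes>\<^sub>M lborel)"
      by measurable
  qed
  also have "\<dots> = (\<integral>\<^sup>+t. ennreal (Tl k (s * t) / (1 + t)) * indicator {0..} t \<partial>lborel)"
  proof (intro nn_integral_cong)
    fix t :: real
    have "(\<integral>\<^sup>+z. ennreal (erlang_density k 1 z) * (ennreal (1 / (1 + t)) * indicator {0..} t * indicator {s*t..} z) \<partial>lborel)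
       = (\<integral>\<^sup>+z. (ennreal (1 / (1 + t)) * indicator {0..} t) * (ennreal (erlang_density k 1 z) * indicator {s*t..} z) \<partial>lborel)"
      by (intro nn_integral_cong) (simp add: ac_simps)
    also have "\<dots> = (ennreal (1 / (1 + t)) * indicator {0..} t) * (\<integral>\<^sup>+z. ennreal (erlang_density k 1 z) * indicator {s*t..} z \<partial>lborel)"
      by (rule nn_integral_cmult) measurable
    also have "\<dots> = ennreal (Tl k (s * t) / (1 + t)) * indicator {0..} t"
    proof (cases "t < 0")
      case True then show ?thesis by simp
    next
      case False
      then have "(\<integral>\<^sup>+z. ennreal (erlang_density k 1 z) * indicator {s*t..} z \<partial>lborel) = ennreal (Tl k (s*t))"
        using s by (intro tail_erlang) auto
      then show ?thesis using False s
        by (simp add: ennreal_mult'[symmetric] Tl_nonneg divide_simps)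
    qed
    finally show "(\<integral>\<^sup>+z. ennreal (erlang_density k 1 z) * (ennreal (1 / (1 + t)) * indicator {0..} t * indicator {s*t..} z) \<partial>lborel)
       = ennreal (Tl k (s * t) / (1 + t)) * indicator {0..} t" .
  qed
  finally show ?thesis .
qed

lemma termid:
  fixes g1 g2 t :: real
  assumes g1: "0 < g1" and g2: "0 < g2" and t: "0 \<le> t" and jn: "j \<le> n"
  shows "(real (n choose j) * (t*g2/g1)^j * (t/g1)^(n-j) * exp (-(t/g1)) / (fact n * (1+t) * (1 + t*g2/g1))) * (fact j / (1 + t*g2/g1)^j)
     = g1 powi (int j + 1 - int n) / (g2 * fact (n-j)) * (t^n * exp (-(1/g1)*t) / ((t + g1/g2)^(j+1) * (t+1)))"
proof -
  have f: "(fact n::real) = fact j * fact (n-j) * real (n choose j)"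
    using binomial_fact_lemma[OF jn] by (metis of_nat_fact of_nat_mult)
  have L: "1 + t*g2/g1 = g2 * (t + g1/g2) / g1" using g1 g2 by (simp add: field_simps)
  have p0: "g1 powi (int (j+1) - int n) = g1 powi int (j+1) / g1 powi int n"
    using g1 by (intro power_int_diff) auto
  have e: "int (j+1) = int j + 1" by simp
  have p: "g1 powi (int j + 1 - int n) = g1^(j+1) / g1^n"
  proof -
    have p1: "g1 powi (int (j+1) - int n) = g1^(j+1)/g1^n" using p0 by (simp only: power_int_of_nat)
    then show ?thesis by (simp only: e)
  qed
  have tn: "t^n = t^j * t^(n-j)" using jn by (simp add: power_add[symmetric])
  have C: "real (n choose j) > 0" using jn by simp
  have gn: "(g1::real)^n = g1^j * g1^(n-j)" using jn by (simp add: power_add[symmetric])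
  have b: "t + g1/g2 > 0" using g1 g2 t by (simp add: add_nonneg_pos)
  have ex: "exp (-(1/g1)*t) = exp (-(t/g1))" by simp
  define u where "u = t + g1/g2"
  define E where "E = exp (-(t/g1))"
  have u: "u > 0" using b u_def by simp
  have E: "E > 0" using E_def by simp
  define w where "w = 1 + t"
  have w: "w > 0" using t w_def by simp
  have "(real (n choose j) * (t*g2/g1)^j * (t/g1)^(n-j) * E / (fact j * fact (n-j) * real (n choose j) * w * (g2 * u / g1))) * (fact j / (g2 * u / g1)^j)
     = g1^(j+1) / g1^(j) / g1^(n-j) / (g2 * fact (n-j)) * (t^j * t^(n-j) * E / (u^(j+1) * w))"
    using g1 g2 t C u E w
    by (simp add: field_simps power_divide power_mult_distrib)
  then show ?thesis
    unfolding f p tn gn ex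
    by (simp add: L u_def E_def w_def add.commute)
qed
definition Qf :: "nat \<Rightarrow> real \<Rightarrow> real \<Rightarrow> real \<Rightarrow> real" where
  "Qf k g1 g2 t = (\<Sum>n\<le>k. \<Sum>j\<le>n. g1 powi (int j + 1 - int n) / (g2 * fact (n-j)) *
      (t^n * exp (-(1/g1)*t) / ((t + g1/g2)^(j+1) * (t+1))))"

lemma lemB:
  fixes g1 g2 t :: real
  assumes g1: "0 < g1" and g2: "0 < g2" and t: "0 \<le> t"
  shows "(\<integral>\<^sup>+y. ennreal (erlang_density 0 1 y) * ennreal (Tl k ((1 + g2*y)/g1 * t) / (1+t)) \<partial>lborel)
     = ennreal (Qf k g1 g2 t)"
proof -
  define \<alpha> where "\<alpha> = t/g1"
  define \<beta> where "\<beta> = t*g2/g1"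
  define L where "L = 1 + t*g2/g1"
  have a0: "0 \<le> \<alpha>" and b0: "0 \<le> \<beta>" and L0: "0 < L"
    using g1 g2 t by (auto simp: \<alpha>_def \<beta>_def L_def add_pos_nonneg)
  define K where "K n j = real (n choose j) * \<beta>^j * \<alpha>^(n-j) * exp (-\<alpha>) / (fact n * (1+t) * L)" for n j :: nat
  have K0: "0 \<le> K n j" for n j using a0 b0 L0 t by (simp add: K_def)
  have pt: "ennreal (erlang_density 0 1 y) * ennreal (Tl k ((1 + g2*y)/g1 * t) / (1+t))
      = (\<Sum>n\<le>k. \<Sum>j\<le>n. ennreal (K n j) * ennreal (erlang_density 0 L y * y^j))" for y
  proof (cases "y < 0")
    case True then show ?thesis by (simp add: erlang_density_def)
  next
    case False
    have s: "(1 + g2*y)/g1 * t = \<beta>*y + \<alpha>" using g1 by (simp add: \<alpha>_def \<beta>_def field_simps)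
    have ex: "exp (-y) * exp (-(\<beta>*y + \<alpha>)) = exp (-\<alpha>) * exp (-(L*y))"
      by (simp add: mult_exp_exp L_def \<beta>_def algebra_simps)
    have "erlang_density 0 1 y * (Tl k ((1 + g2*y)/g1 * t) / (1+t))
        = (\<Sum>n\<le>k. exp (-y) * ((\<beta>*y + \<alpha>)^n * exp (-(\<beta>*y + \<alpha>)) / fact n) / (1+t))"
      using False by (simp only: s) (simp add: erlang_density_def Tl_def sum_distrib_left sum_divide_distrib)
    also have "\<dots> = (\<Sum>n\<le>k. \<Sum>j\<le>n. K n j * (erlang_density 0 L y * y^j))"
    proof (rule sum.cong[OF refl])
      fix n assume "n \<in> {..k}"
      have fnz: "(fact n::real) + t * fact n \<noteq> 0" using t
        by (metis add_pos_nonneg fact_gt_zero less_irrefl mult_nonneg_nonneg order_less_imp_le)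
      have "exp (-y) * ((\<beta>*y + \<alpha>)^n * exp (-(\<beta>*y + \<alpha>)) / fact n) / (1+t)
          = (\<Sum>j\<le>n. real (n choose j) * (\<beta>*y)^j * \<alpha>^(n-j)) * (exp (-y) * exp (-(\<beta>*y + \<alpha>))) / (fact n * (1+t))"
        unfolding binomial_ring[of "\<beta>*y" \<alpha> n] by (simp add: field_simps)
      also have "\<dots> = (\<Sum>j\<le>n. real (n choose j) * (\<beta>*y)^j * \<alpha>^(n-j) * (exp (-\<alpha>) * exp (-(L*y))) / (fact n * (1+t)))"
        unfolding ex by (simp add: sum_distrib_right sum_divide_distrib)
      also have "\<dots> = (\<Sum>j\<le>n. K n j * (erlang_density 0 L y * y^j))"
      proof (intro sum.cong refl)
        fix j
        have D: "fact n * (1+t) > (0::real)" using t by (simp add: add_pos_nonneg)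
        show "real (n choose j) * (\<beta>*y)^j * \<alpha>^(n-j) * (exp (-\<alpha>) * exp (-(L*y))) / (fact n * (1+t))
          = K n j * (erlang_density 0 L y * y^j)"
          using False L0 t D unfolding erlang_density_def K_def
          by (simp add: power_mult_distrib divide_simps)
      qed
      finally show "exp (-y) * ((\<beta>*y + \<alpha>)^n * exp (-(\<beta>*y + \<alpha>)) / fact n) / (1+t) = (\<Sum>j\<le>n. K n j * (erlang_density 0 L y * y^j))" .
    qed
    finally have eq: "erlang_density 0 1 y * (Tl k ((1 + g2*y)/g1 * t) / (1+t)) = (\<Sum>n\<le>k. \<Sum>j\<le>n. K n j * (erlang_density 0 L y * y^j))" .
    have nn: "0 \<le> K n j * (erlang_density 0 L y * y^j)" for n j
      using K0 L0 False by (intro mult_nonneg_nonneg) auto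
    have "ennreal (erlang_density 0 1 y) * ennreal (Tl k ((1 + g2*y)/g1 * t) / (1+t))
       = ennreal (erlang_density 0 1 y * (Tl k ((1 + g2*y)/g1 * t) / (1+t)))"
      using False g1 g2 t by (intro ennreal_mult[symmetric]) (auto simp: erlang_density_def intro!: divide_nonneg_nonneg Tl_nonneg)
    also have "\<dots> = ennreal (\<Sum>n\<le>k. \<Sum>j\<le>n. K n j * (erlang_density 0 L y * y^j))" by (simp only: eq)
    also have "\<dots> = (\<Sum>n\<le>k. \<Sum>j\<le>n. ennreal (K n j * (erlang_density 0 L y * y^j)))"
      using nn by (simp add: sum_nonneg)
    also have "\<dots> = (\<Sum>n\<le>k. \<Sum>j\<le>n. ennreal (K n j) * ennreal (erlang_density 0 L y * y^j))"
      using K0 L0 False by (intro sum.cong refl ennreal_mult) auto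
    finally show ?thesis .
  qed
  have "(\<integral>\<^sup>+y. ennreal (erlang_density 0 1 y) * ennreal (Tl k ((1 + g2*y)/g1 * t) / (1+t)) \<partial>lborel)
      = (\<integral>\<^sup>+y. (\<Sum>n\<le>k. \<Sum>j\<le>n. ennreal (K n j) * ennreal (erlang_density 0 L y * y^j)) \<partial>lborel)"
    by (simp only: pt)
  also have "\<dots> = (\<Sum>n\<le>k. \<Sum>j\<le>n. \<integral>\<^sup>+y. ennreal (K n j) * ennreal (erlang_density 0 L y * y^j) \<partial>lborel)"
    by (simp add: nn_integral_sum)
  also have "\<dots> = (\<Sum>n\<le>k. \<Sum>j\<le>n. ennreal (K n j) * ennreal (fact j / L^j))"
    using L0 by (simp add: nn_integral_cmult nn_integral_erlang_ith_moment)
  also have "\<dots> = (\<Sum>n\<le>k. \<Sum>j\<le>n. ennreal (K n j * (fact j / L^j)))"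
    using L0 K0 by (simp add: ennreal_mult[symmetric])
  also have "\<dots> = ennreal (\<Sum>n\<le>k. \<Sum>j\<le>n. K n j * (fact j / L^j))"
    using L0 K0 by (simp add: sum_nonneg)
  also have "(\<Sum>n\<le>k. \<Sum>j\<le>n. K n j * (fact j / L^j)) = Qf k g1 g2 t"
    unfolding Qf_def K_def \<alpha>_def \<beta>_def L_def
    using g1 g2 t by (intro sum.cong refl termid) auto
  finally show ?thesis .
qed
lemma lemC:
  fixes a b :: real
  assumes a: "0 < a" and b: "0 < b"
  shows "(\<integral>\<^sup>+t. ennreal (t ^ m * exp (- a * t) / ((t + b) ^ n * (t + 1))) * indicator {0..} t \<partial>lborel)
      = ennreal (I1 a b m n)" and "0 \<le> I1 a b m n"
proof -
  define h where "h t = indicator {0<..} t * (t ^ m * exp (- a * t) / ((t + b) ^ n * (t + 1)))" for t :: real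
  have hm[measurable]: "h \<in> borel_measurable lborel" unfolding h_def by measurable
  have h0: "0 \<le> h t" for t unfolding h_def using b by (auto simp: indicator_def intro!: divide_nonneg_nonneg mult_nonneg_nonneg)
  have "(\<integral>\<^sup>+x. ennreal (erlang_density 0 a x * x ^ m) \<partial>lborel) < \<infinity>"
    using a by (simp add: nn_integral_erlang_ith_moment)
  then have ie: "integrable lborel (\<lambda>x. erlang_density 0 a x * x ^ m)"
    using a by (intro integrableI_nonneg) (auto intro!: AE_I2 mult_nonneg_nonneg simp: erlang_density_def)
  have hi: "integrable lborel h"
  proof (rule Bochner_Integration.integrable_bound[OF integrable_divide[OF ie, of "a * b^n"] hm], intro AE_I2)
    fix x :: real
    show "norm (h x) \<le> norm (erlang_density 0 a x * x ^ m / (a * b^n))"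
    proof (cases "0 < x")
      case False then show ?thesis by (simp add: h_def)
    next
      case True
      have "b^n \<le> (x+b)^n" using True b by (intro power_mono) auto
      moreover have "b^n * 1 \<le> (x+b)^n * (x+1)" using True b \<open>b^n \<le> (x+b)^n\<close>
        by (intro mult_mono) auto
      then have "x ^ m * exp (- a * x) / ((x + b) ^ n * (x + 1)) \<le> x ^ m * exp (- a * x) / b^n"
        using True b by (intro divide_left_mono mult_pos_pos) auto
      then show ?thesis using True a b h0[of x]
        by (simp add: h_def erlang_density_def mult.commute)
    qed
  qed
  have "I1 a b m n = integral\<^sup>L lborel h"
    unfolding I1_def set_lebesgue_integral_def h_def by simp
  then have eqI: "ennreal (I1 a b m n) = (\<integral>\<^sup>+t. ennreal (h t) \<partial>lborel)"
    using nn_integral_eq_integral[OF hi] h0 by simp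
  have "(\<integral>\<^sup>+t. ennreal (t ^ m * exp (- a * t) / ((t + b) ^ n * (t + 1))) * indicator {0..} t \<partial>lborel)
      = (\<integral>\<^sup>+t. ennreal (h t) \<partial>lborel)"
    by (intro nn_integral_cong_AE, use AE_lborel_singleton[of 0] in eventually_elim)
       (auto simp: h_def indicator_def)
  with eqI show "(\<integral>\<^sup>+t. ennreal (t ^ m * exp (- a * t) / ((t + b) ^ n * (t + 1))) * indicator {0..} t \<partial>lborel)
      = ennreal (I1 a b m n)" by simp
  show "0 \<le> I1 a b m n"
    using \<open>I1 a b m n = integral\<^sup>L lborel h\<close> h0 by (simp add: integral_nonneg_AE)
qed

theorem lemma3:
  fixes P :: "'s measure" and Z Y :: "'s \<Rightarrow> real"
    and \<gamma>1 \<gamma>2 :: real and M :: nat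
  assumes "prob_space P"
    and "\<gamma>1 > 0" and "\<gamma>2 > 0" and "M \<ge> 1"
    and "distributed P lborel Z (erlang_density (M - 1) 1)"
    and "distributed P lborel Y (exponential_density 1)"
    and "prob_space.indep_var P borel Z borel Y"
  shows "prob_space.expectation P
           (\<lambda>\<omega>. log 2 (1 + \<gamma>1 * Z \<omega> / (1 + \<gamma>2 * Y \<omega>)))
         = log 2 (exp 1) *
           (\<Sum>i<M. \<Sum>l\<le>i. \<gamma>1 powi (int l + 1 - int i) / (\<gamma>2 * fact (i - l))
              * I1 (1 / \<gamma>1) (\<gamma>1 / \<gamma>2) i (l + 1))"
proof -
  interpret prob_space P by fact
  define k where "k = M - 1"
  have Mk: "M = Suc k" using assms(4) k_def by simp
  note g1 = assms(2) and g2 = assms(3)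
  have dZ[measurable]: "distributed P lborel Z (erlang_density k 1)" using assms(5) k_def by simp
  have dY[measurable]: "distributed P lborel Y (erlang_density 0 1)" using assms(6) by simp
  have ind: "indep_var lborel Z lborel Y" using assms(7) unfolding indep_var_def indep_vars_def
    by (simp add: case_bool_if cong: if_cong)
  have joint: "distributed P (lborel \<Otimes>\<^sub>M lborel) (\<lambda>x. (Z x, Y x))
      (\<lambda>(x, y). ennreal (erlang_density k 1 x) * ennreal (erlang_density 0 1 y))"
    using distributed_joint_indep[OF sigma_finite_lborel sigma_finite_lborel dZ dY ind] by simp
  define G where "G p = ennreal (ln (1 + \<gamma>1 * fst p / (1 + \<gamma>2 * snd p)))" for p :: "real \<times> real"
  have Gm: "G \<in> borel_measurable (lborel \<Otimes>\<^sub>M lborel)" unfolding G_def by measurable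
  define N where "N = (\<integral>\<^sup>+\<omega>. ennreal (ln (1 + \<gamma>1 * Z \<omega> / (1 + \<gamma>2 * Y \<omega>))) \<partial>P)"
  have "N = (\<integral>\<^sup>+p. (\<lambda>(x, y). ennreal (erlang_density k 1 x) * ennreal (erlang_density 0 1 y)) p * G p \<partial>(lborel \<Otimes>\<^sub>M lborel))"
    unfolding N_def using distributed_nn_integral[OF joint Gm] by (simp add: G_def)
  also have "\<dots> = (\<integral>\<^sup>+y. \<integral>\<^sup>+z. ennreal (erlang_density k 1 z) * ennreal (erlang_density 0 1 y) * G (z, y) \<partial>lborel \<partial>lborel)"
    by (subst lborel_pair.nn_integral_snd[symmetric]) (use Gm in \<open>auto simp: split_beta'\<close>)
  also have "\<dots> = (\<integral>\<^sup>+y. ennreal (erlang_density 0 1 y) * (\<integral>\<^sup>+t. ennreal (Tl k ((1 + \<gamma>2*y)/\<gamma>1 * t) / (1+t)) * indicator {0..} t \<partial>lborel) \<partial>lborel)"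
  proof (intro nn_integral_cong)
    fix y :: real
    show "(\<integral>\<^sup>+z. ennreal (erlang_density k 1 z) * ennreal (erlang_density 0 1 y) * G (z, y) \<partial>lborel)
      = ennreal (erlang_density 0 1 y) * (\<integral>\<^sup>+t. ennreal (Tl k ((1 + \<gamma>2*y)/\<gamma>1 * t) / (1+t)) * indicator {0..} t \<partial>lborel)"
    proof (cases "y < 0")
      case True then show ?thesis by (simp add: erlang_density_def)
    next
      case False
      define s where "s = (1 + \<gamma>2*y)/\<gamma>1"
      have s0: "0 < s" using False g1 g2 by (simp add: s_def add_pos_nonneg)
      have "(\<integral>\<^sup>+z. ennreal (erlang_density k 1 z) * ennreal (erlang_density 0 1 y) * G (z, y) \<partial>lborel)
        = (\<integral>\<^sup>+z. ennreal (erlang_density 0 1 y) * (ennreal (erlang_density k 1 z) * ennreal (ln (1 + z / s))) \<partial>lborel)"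
        by (intro nn_integral_cong) (simp add: G_def s_def field_simps)
      also have "\<dots> = ennreal (erlang_density 0 1 y) * (\<integral>\<^sup>+z. ennreal (erlang_density k 1 z) * ennreal (ln (1 + z / s)) \<partial>lborel)"
        by (rule nn_integral_cmult) measurable
      also have "\<dots> = ennreal (erlang_density 0 1 y) * (\<integral>\<^sup>+t. ennreal (Tl k (s * t) / (1 + t)) * indicator {0..} t \<partial>lborel)"
        by (simp only: lemA[OF s0])
      finally show ?thesis by (simp add: s_def)
    qed
  qed
  also have "\<dots> = (\<integral>\<^sup>+y. \<integral>\<^sup>+t. ennreal (erlang_density 0 1 y) * (ennreal (Tl k ((1 + \<gamma>2*y)/\<gamma>1 * t) / (1+t)) * indicator {0..} t) \<partial>lborel \<partial>lborel)"
    by (intro nn_integral_cong nn_integral_cmult[symmetric]) measurable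
  also have "\<dots> = (\<integral>\<^sup>+t. \<integral>\<^sup>+y. ennreal (erlang_density 0 1 y) * (ennreal (Tl k ((1 + \<gamma>2*y)/\<gamma>1 * t) / (1+t)) * indicator {0..} t) \<partial>lborel \<partial>lborel)"
    by (rule lborel_pair.Fubini') measurable
  also have "\<dots> = (\<integral>\<^sup>+t. ennreal (Qf k \<gamma>1 \<gamma>2 t) * indicator {0..} t \<partial>lborel)"
  proof (intro nn_integral_cong)
    fix t :: real
    show "(\<integral>\<^sup>+y. ennreal (erlang_density 0 1 y) * (ennreal (Tl k ((1 + \<gamma>2*y)/\<gamma>1 * t) / (1+t)) * indicator {0..} t) \<partial>lborel)
       = ennreal (Qf k \<gamma>1 \<gamma>2 t) * indicator {0..} t"
    proof (cases "t < 0")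
      case True then show ?thesis by simp
    next
      case False
      then show ?thesis using lemB[OF g1 g2, of t k] by (simp add: mult.assoc)
    qed
  qed
  finally have N1: "N = (\<integral>\<^sup>+t. ennreal (Qf k \<gamma>1 \<gamma>2 t) * indicator {0..} t \<partial>lborel)" .
  define c where "c n j = \<gamma>1 powi (int j + 1 - int n) / (\<gamma>2 * fact (n-j))" for n j :: nat
  define h where "h n j t = t^n * exp (-(1/\<gamma>1)*t) / ((t + \<gamma>1/\<gamma>2)^(j+1) * (t+1))" for n j :: nat and t :: real
  have c0: "0 \<le> c n j" for n j using g1 g2 by (simp add: c_def)
  have h0: "0 \<le> t \<Longrightarrow> 0 \<le> h n j t" for n j t using g1 g2
    by (simp add: h_def)
  have pq: "ennreal (Qf k \<gamma>1 \<gamma>2 t) * indicator {0..} t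
      = (\<Sum>n\<le>k. \<Sum>j\<le>n. ennreal (c n j) * (ennreal (h n j t) * indicator {0..} t))" for t
  proof (cases "t < 0")
    case True then show ?thesis by simp
  next
    case False
    have "Qf k \<gamma>1 \<gamma>2 t = (\<Sum>n\<le>k. \<Sum>j\<le>n. c n j * h n j t)" by (simp add: Qf_def c_def h_def)
    then have "ennreal (Qf k \<gamma>1 \<gamma>2 t) = (\<Sum>n\<le>k. \<Sum>j\<le>n. ennreal (c n j * h n j t))"
      using c0 h0 False by (simp add: sum_nonneg)
    also have "\<dots> = (\<Sum>n\<le>k. \<Sum>j\<le>n. ennreal (c n j) * ennreal (h n j t))"
      using c0 h0 False by (intro sum.cong refl ennreal_mult) auto
    finally show ?thesis using False by simp
  qed
  have N2: "N = ennreal (\<Sum>n\<le>k. \<Sum>j\<le>n. c n j * I1 (1/\<gamma>1) (\<gamma>1/\<gamma>2) n (j+1))"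
  proof -
    have "N = (\<integral>\<^sup>+t. (\<Sum>n\<le>k. \<Sum>j\<le>n. ennreal (c n j) * (ennreal (h n j t) * indicator {0..} t)) \<partial>lborel)"
      unfolding N1 by (simp only: pq)
    also have "\<dots> = (\<Sum>n\<le>k. \<Sum>j\<le>n. ennreal (c n j) * (\<integral>\<^sup>+t. ennreal (h n j t) * indicator {0..} t \<partial>lborel))"
      by (simp add: nn_integral_sum nn_integral_cmult h_def)
    also have "\<dots> = (\<Sum>n\<le>k. \<Sum>j\<le>n. ennreal (c n j) * ennreal (I1 (1/\<gamma>1) (\<gamma>1/\<gamma>2) n (j+1)))"
      using g1 g2 unfolding h_def by (intro sum.cong refl arg_cong2[where f="(*)"] lemC(1)) auto
    also have "\<dots> = (\<Sum>n\<le>k. \<Sum>j\<le>n. ennreal (c n j * I1 (1/\<gamma>1) (\<gamma>1/\<gamma>2) n (j+1)))"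
      using c0 g1 g2 by (intro sum.cong refl ennreal_mult[symmetric]) (auto intro: lemC(2))
    also have "\<dots> = ennreal (\<Sum>n\<le>k. \<Sum>j\<le>n. c n j * I1 (1/\<gamma>1) (\<gamma>1/\<gamma>2) n (j+1))"
      using c0 g1 g2 by (simp add: sum_nonneg lemC(2))
    finally show ?thesis .
  qed
  have S0: "0 \<le> (\<Sum>n\<le>k. \<Sum>j\<le>n. c n j * I1 (1/\<gamma>1) (\<gamma>1/\<gamma>2) n (j+1))"
    using c0 g1 g2 by (intro sum_nonneg mult_nonneg_nonneg lemC(2)) auto
  have Z0: "AE \<omega> in P. 0 \<le> Z \<omega>"
    by (subst distributed_AE2[OF dZ]) (auto intro!: AE_I2 simp: erlang_density_def)
  have Y0: "AE \<omega> in P. 0 \<le> Y \<omega>"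
    by (subst distributed_AE2[OF dY]) (auto intro!: AE_I2 simp: erlang_density_def)
  have Zm[measurable]: "Z \<in> borel_measurable P" using distributed_measurable[OF dZ] by simp
  have Ym[measurable]: "Y \<in> borel_measurable P" using distributed_measurable[OF dY] by simp
  have "expectation (\<lambda>\<omega>. ln (1 + \<gamma>1 * Z \<omega> / (1 + \<gamma>2 * Y \<omega>))) = enn2real N"
    unfolding N_def
  proof (rule integral_eq_nn_integral)
    show "(\<lambda>\<omega>. ln (1 + \<gamma>1 * Z \<omega> / (1 + \<gamma>2 * Y \<omega>))) \<in> borel_measurable P" by measurable
    show "AE \<omega> in P. 0 \<le> ln (1 + \<gamma>1 * Z \<omega> / (1 + \<gamma>2 * Y \<omega>))"
      using Z0 Y0 by eventually_elim (use g1 g2 in \<open>auto intro!: divide_nonneg_nonneg add_nonneg_nonneg\<close>)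
  qed
  then have E: "expectation (\<lambda>\<omega>. ln (1 + \<gamma>1 * Z \<omega> / (1 + \<gamma>2 * Y \<omega>))) = (\<Sum>n\<le>k. \<Sum>j\<le>n. c n j * I1 (1/\<gamma>1) (\<gamma>1/\<gamma>2) n (j+1))"
    using N2 S0 by simp
  have "expectation (\<lambda>\<omega>. log 2 (1 + \<gamma>1 * Z \<omega> / (1 + \<gamma>2 * Y \<omega>)))
      = expectation (\<lambda>\<omega>. ln (1 + \<gamma>1 * Z \<omega> / (1 + \<gamma>2 * Y \<omega>))) / ln 2"
    by (simp add: log_def)
  also have "\<dots> = log 2 (exp 1) * (\<Sum>n\<le>k. \<Sum>j\<le>n. c n j * I1 (1/\<gamma>1) (\<gamma>1/\<gamma>2) n (j+1))"
    unfolding E by (simp add: log_def)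
  finally show ?thesis
    unfolding Mk lessThan_Suc_atMost c_def by simp
qed

end
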